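(* Let $g=\prod_{i=1}^e g_i\in\mathbb{F}_2[X]$ with $g\mid X^n-1$, where $g_1,\dots,g_e$ are distinct irreducible polynomials, and for each $i$ let $\alpha_i$ be a root of $g_i$ in its splitting field. For $f\in\mathbb{F}_2[X]$ and $0\le i\le n-1$ set $\mathrm{LC}(i,f)=(\alpha_1^if(\alpha_1),\alpha_2^if(\alpha_2),\dots,\alpha_e^if(\alpha_e))$ and $\mathrm{LC}(f)=\{\mathrm{LC}(i,f):0\le i\le n-1\}$. Then for $f_1,f_2\in\mathbb{F}_2[X]$, $\mathrm{LC}(f_1)=\mathrm{LC}(f_2)$ if and only if $f_1(X)\equiv X^kf_2(X)\pmod{g(X)}$ for some integer $k\ge 0$.
   Context: $\mathrm{LC}(i,f)$ is the value of the linear combination, with coefficients given by the coefficients of $f$, of consecutive columns starting at column $i$ of the parity-check matrix whose $j$-th column is $(\alpha_1^j,\dots,\alpha_e^j)$ of the binary cyclic code generated by $g$. *)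

theory Defs
  imports "HOL-Computational_Algebra.Polynomial" "HOL-Library.Z2" "HOL-Number_Theory.Cong"
begin

definition eval2 :: "bit poly \<Rightarrow> 'K::field \<Rightarrow> 'K" where
  "eval2 f a = poly (map_poly of_bit f) a"

definition LC :: "'K::field list \<Rightarrow> nat \<Rightarrow> bit poly \<Rightarrow> 'K list" where
  "LC alphas i f = map (\<lambda>a. a ^ i * eval2 f a) alphas"

definition LCset :: "'K::field list \<Rightarrow> nat \<Rightarrow> bit poly \<Rightarrow> 'K list set" where
  "LCset alphas n f = (\<lambda>i. LC alphas i f) ` {0..<n}"

end

theory Submission
  imports Defs
begin

lemma one_plus_one_K:
  assumes "CHAR('K::field) = 2"
  shows "(1::'K) + 1 = 0"
proof -
  have "(of_nat 2 :: 'K) = 0" using assms by (metis of_nat_CHAR)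
  then show ?thesis by simp
qed

lemma ofb_add:
  assumes "CHAR('K::field) = 2"
  shows "(of_bit (a + b) :: 'K) = of_bit a + of_bit b"
  using one_plus_one_K[OF assms] by (cases a; cases b) auto

lemma ofb_mult: "(of_bit (a * b) :: 'K::field) = of_bit a * of_bit b"
  by (cases a; cases b) auto

lemma eval2_add:
  assumes "CHAR('K::field) = 2"
  shows "eval2 (p + q) (x::'K) = eval2 p x + eval2 q x"
proof -
  have "map_poly (of_bit :: bit \<Rightarrow> 'K) (p + q) = map_poly of_bit p + map_poly of_bit q"
  proof (rule poly_eqI)
    fix m
    have "(of_bit (coeff p m + coeff q m) :: 'K) = of_bit (coeff p m) + of_bit (coeff q m)"
      by (rule ofb_add[OF assms])
    then show "coeff (map_poly (of_bit :: bit \<Rightarrow> 'K) (p + q)) m =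
      coeff (map_poly of_bit p + map_poly of_bit q) m"
      by (simp add: coeff_map_poly)
  qed
  then show ?thesis by (simp add: eval2_def)
qed

lemma eval2_pCons:
  "eval2 (pCons a p) (x::'K::field) = of_bit a + x * eval2 p x"
  by (simp add: eval2_def map_poly_pCons)

lemma eval2_mult:
  assumes "CHAR('K::field) = 2"
  shows "eval2 (p * q) (x::'K) = eval2 p x * eval2 q x"
proof (induction p)
  case 0
  then show ?case by (simp add: eval2_def)
next
  case (pCons a p)
  have "pCons a p * q = smult a q + pCons 0 (p * q)" by simp
  moreover have "eval2 (smult a q) x = of_bit a * eval2 q x"
    by (cases a) (auto simp: eval2_def)
  ultimately show ?case using pCons
    by (simp add: eval2_add[OF assms] eval2_pCons algebra_simps)
qed

lemma eval2_monom: "eval2 (monom 1 k) (x::'K::field) = x ^ k"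
  by (simp add: eval2_def map_poly_monom poly_monom)

lemma eval2_one: "eval2 1 (x::'K::field) = 1"
  by (simp add: eval2_def)

lemma eval2_diff:
  assumes "CHAR('K::field) = 2"
  shows "eval2 (p - q) (x::'K) = eval2 p x - eval2 q x"
proof -
  have "p - q = p + q"
    by (rule poly_eqI) simp
  moreover have "eval2 q x = - eval2 q x"
    using one_plus_one_K[OF assms]
    by (metis add.inverse_unique distrib_left mult_1_right mult_zero_right)
  ultimately show ?thesis using eval2_add[OF assms] by (metis diff_minus_eq_add)
qed

lemma unit_bitpoly: "is_unit (u::bit poly) \<Longrightarrow> u = 1"
proof -
  assume "is_unit u"
  then obtain c where "u = [:c:]" "c dvd 1" by (auto simp: is_unit_poly_iff)
  then show "u = 1" by (cases c) (auto simp: one_pCons)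
qed

lemma irred_dvd_eq:
  assumes "irreducible (a::bit poly)" "irreducible b" "a dvd b"
  shows "a = b"
proof -
  obtain u where u: "b = a * u" using assms(3) by (auto elim: dvdE)
  have "\<not> is_unit a" using assms(1) by (simp add: irreducible_not_unit)
  then have "is_unit u" using irreducibleD[OF assms(2) u] by auto
  then show ?thesis using u unit_bitpoly by simp
qed

lemma minpoly_dvd:
  assumes "CHAR('K::field) = 2" "irreducible h" "eval2 h (x::'K) = 0" "eval2 p x = 0"
  shows "h dvd p"
proof -
  define S where "S = {m. m \<noteq> 0 \<and> eval2 m x = 0}"
  have hS: "h \<in> S" using assms(2,3) by (auto simp: S_def)
  define d where "d = (LEAST d. \<exists>m\<in>S. degree m = d)"
  have "\<exists>m\<in>S. degree m = d" unfolding d_def by (rule LeastI[of _ "degree h"]) (use hS in blast)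
  then obtain m where m: "m \<in> S" "degree m = d" by blast
  have minim: "d \<le> degree m'" if "m' \<in> S" for m'
    unfolding d_def using that by (auto intro: Least_le)
  have key: "m dvd q" if "eval2 q x = 0" for q
  proof -
    have "q = q div m * m + q mod m" by simp
    then have "eval2 q x = eval2 (q div m) x * eval2 m x + eval2 (q mod m) x"
      by (metis eval2_add[OF assms(1)] eval2_mult[OF assms(1)])
    then have "eval2 (q mod m) x = 0" using that m(1) by (simp add: S_def)
    moreover have "m \<noteq> 0" using m(1) by (simp add: S_def)
    ultimately have "q mod m = 0"
    proof (rule_tac ccontr)
      assume "eval2 (q mod m) x = 0" "m \<noteq> 0" "q mod m \<noteq> 0"
      then have "d \<le> degree (q mod m)" using minim[of "q mod m"] by (simp add: S_def)
      then show False using degree_mod_less[of m q] \<open>m \<noteq> 0\<close> \<open>q mod m \<noteq> 0\<close> m(2) by simp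
    qed
    then show ?thesis by (simp add: mod_eq_0_iff_dvd)
  qed
  have "m dvd h" using key assms(3) .
  then obtain u where u: "h = m * u" by (auto elim: dvdE)
  have "\<not> is_unit m"
  proof
    assume "is_unit m"
    then have "m = 1" by (rule unit_bitpoly)
    then show False using m(1) by (simp add: S_def eval2_one)
  qed
  then have "is_unit u" using irreducibleD[OF assms(2) u] by auto
  then have "h = m" using u unit_bitpoly by simp
  then show ?thesis using key assms(4) by simp
qed

lemma eval2_prod_list:
  assumes "CHAR('K::field) = 2"
  shows "eval2 (prod_list gs) (x::'K) = (\<Prod>g\<leftarrow>gs. eval2 g x)"
  by (induction gs) (simp_all add: eval2_one eval2_mult[OF assms])

lemma prod_list_dvd_irr:
  assumes "CHAR('K::field) = 2" "length (alphas::'K list) = length gs" "distinct gs"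
    "\<forall>h\<in>set gs. irreducible (h::bit poly)"
    "\<forall>i<length gs. eval2 (gs ! i) (alphas ! i) = 0" "\<forall>h\<in>set gs. h dvd p"
  shows "prod_list gs dvd p"
  using assms(2-6)
proof (induction gs arbitrary: alphas)
  case Nil
  then show ?case by simp
next
  case (Cons a gs)
  obtain x xs where al: "alphas = x # xs" using Cons.prems(1) by (cases alphas) auto
  have "prod_list gs dvd p"
    using Cons.IH[of xs] Cons.prems al by force
  then obtain q where q: "p = prod_list gs * q" by (auto elim: dvdE)
  have ax: "eval2 a x = 0" using Cons.prems(4) al by force
  have ia: "irreducible a" using Cons.prems(3) by simp
  have "eval2 p x = 0"
  proof -
    obtain r where "p = a * r" using Cons.prems(5) by (auto elim: dvdE)
    then show ?thesis using ax by (simp add: eval2_mult[OF assms(1)])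
  qed
  then have "eval2 (prod_list gs) x = 0 \<or> eval2 q x = 0"
    using q by (simp add: eval2_mult[OF assms(1)])
  then show ?case
  proof
    assume "eval2 (prod_list gs) x = 0"
    then obtain g where g: "g \<in> set gs" "eval2 g x = 0"
      by (auto simp: eval2_prod_list[OF assms(1)] prod_list_zero_iff)
    then have "a dvd g" using minpoly_dvd[OF assms(1) ia ax] by blast
    then have "a = g" using irred_dvd_eq ia Cons.prems(3) g(1) by auto
    then show ?thesis using Cons.prems(2) g(1) by auto
  next
    assume "eval2 q x = 0"
    then have "a dvd q" using minpoly_dvd[OF assms(1) ia ax] by blast
    then show ?thesis using q by (simp add: mult.commute mult_dvd_mono)
  qed
qed

theorem lemma1:
  fixes gs :: "bit poly list" and alphas :: "'K::field list" and g f1 f2 :: "bit poly" and n :: nat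
  assumes "CHAR('K) = 2"
    and "n \<ge> 1"
    and "length alphas = length gs"
    and "distinct gs"
    and "\<forall>h\<in>set gs. irreducible h"
    and "g = prod_list gs"
    and "g dvd [:-1:] + monom 1 n"
    and "\<forall>i<length gs. eval2 (gs ! i) (alphas ! i) = 0"
  shows "LCset alphas n f1 = LCset alphas n f2 \<longleftrightarrow>
         (\<exists>k::nat. [f1 = monom 1 k * f2] (mod g))"
proof
  assume eq: "LCset alphas n f1 = LCset alphas n f2"
  have "LC alphas 0 f1 \<in> LCset alphas n f1" using assms(2) by (auto simp: LCset_def)
  then obtain i where i: "LC alphas 0 f1 = LC alphas i f2"
    using eq by (auto simp: LCset_def)
  have root: "eval2 (f1 - monom 1 i * f2) a = 0" if "a \<in> set alphas" for a
  proof -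
    have "eval2 f1 a = a ^ i * eval2 f2 a"
      using i that by (auto simp: LC_def)
    then show ?thesis by (simp add: eval2_diff[OF assms(1)] eval2_mult[OF assms(1)] eval2_monom)
  qed
  have "\<forall>h\<in>set gs. h dvd f1 - monom 1 i * f2"
  proof
    fix h assume "h \<in> set gs"
    then obtain j where j: "j < length gs" "h = gs ! j" by (auto simp: in_set_conv_nth)
    then have "alphas ! j \<in> set alphas" using assms(3) by auto
    then show "h dvd f1 - monom 1 i * f2"
      using minpoly_dvd[OF assms(1), of h "alphas ! j"] root assms(5,8) j by auto
  qed
  then have "g dvd f1 - monom 1 i * f2" using prod_list_dvd_irr[OF assms(1,3,4,5,8)] assms(6) by blast
  then show "\<exists>k::nat. [f1 = monom 1 k * f2] (mod g)" by (auto simp: cong_iff_dvd_diff)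
next
  assume "\<exists>k::nat. [f1 = monom 1 k * f2] (mod g)"
  then obtain k where "g dvd f1 - monom 1 k * f2" by (auto simp: cong_iff_dvd_diff)
  have props: "eval2 f1 a = a ^ k * eval2 f2 a \<and> a ^ n = 1" if "a \<in> set alphas" for a
  proof -
    obtain j where j: "j < length gs" "a = alphas ! j" using \<open>a \<in> set alphas\<close> assms(3)
      by (auto simp: in_set_conv_nth)
    have r: "eval2 (gs ! j) a = 0" using assms(8) j by auto
    have d: "gs ! j dvd g" using assms(6) j by (simp add: prod_list_dvd)
    have "eval2 (f1 - monom 1 k * f2) a = 0"
    proof -
      obtain q where "f1 - monom 1 k * f2 = gs ! j * q"
        using d \<open>g dvd f1 - monom 1 k * f2\<close> by (meson dvd_trans dvdE)
      then show ?thesis using r by (simp add: eval2_mult[OF assms(1)])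
    qed
    then have 1: "eval2 f1 a = a ^ k * eval2 f2 a"
      by (simp add: eval2_diff[OF assms(1)] eval2_mult[OF assms(1)] eval2_monom)
    have "eval2 ([:-1:] + monom 1 n) a = 0"
    proof -
      obtain q where "[:-1:] + monom 1 n = gs ! j * q"
        using d assms(7) by (meson dvd_trans dvdE)
      then show ?thesis using r by (simp add: eval2_mult[OF assms(1)])
    qed
    moreover have eqp: "[:-1:] + monom 1 n = 1 + (monom 1 n :: bit poly)" by (simp add: one_pCons)
    moreover have "eval2 (1 + (monom 1 n :: bit poly)) a = 1 + a ^ n"
      by (simp only: eval2_add[OF assms(1)] eval2_monom eval2_one)
    ultimately have "1 + a ^ n = 0" by (simp only: eqp)
    then have an: "a ^ n = -1" by (simp add: eq_neg_iff_add_eq_0 add.commute)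
    have "(1::'K) = -1" using one_plus_one_K[OF assms(1)] by (simp add: eq_neg_iff_add_eq_0)
    then have "a ^ n = 1" using an by simp
    with 1 show ?thesis by simp
  qed
  have LCshift: "LC alphas i f1 = LC alphas ((i + k) mod n) f2" for i
  proof -
    have "a ^ i * eval2 f1 a = a ^ ((i + k) mod n) * eval2 f2 a" if "a \<in> set alphas" for a
    proof -
      have "a ^ (i + k) = a ^ ((i + k) mod n) * (a ^ n) ^ ((i + k) div n)"
        by (metis mod_div_mult_eq power_add power_mult mult.commute)
      then have "a ^ (i + k) = a ^ ((i + k) mod n)" using props[OF that] by simp
      then show ?thesis using props[OF that] by (simp add: power_add mult.assoc)
    qed
    then show ?thesis by (simp add: LC_def)
  qed
  have img: "(\<lambda>i. (i + k) mod n) ` {0..<n} = {0..<n}"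
  proof
    show "(\<lambda>i. (i + k) mod n) ` {0..<n} \<subseteq> {0..<n}" using assms(2) by auto
  next
    show "{0..<n} \<subseteq> (\<lambda>i. (i + k) mod n) ` {0..<n}"
    proof
      fix j assume "j \<in> {0..<n}"
      then have jn: "j < n" by simp
      have "((j + (n - k mod n)) mod n + k) mod n = (j + (n - k mod n) + k) mod n"
        by (simp add: mod_add_left_eq)
      also have "\<dots> = (j + (n - k mod n) + k mod n) mod n"
        by (metis mod_add_right_eq)
      also have "j + (n - k mod n) + k mod n = j + n"
      proof -
        have "k mod n < n" using assms(2) by simp
        then show ?thesis by linarith
      qed
      also have "(j + n) mod n = j" using jn by simp
      finally have "j = ((j + (n - k mod n)) mod n + k) mod n" by simp
      moreover have "(j + (n - k mod n)) mod n \<in> {0..<n}" using assms(2) by auto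
      ultimately show "j \<in> (\<lambda>i. (i + k) mod n) ` {0..<n}" by blast
    qed
  qed
  have "LCset alphas n f1 = (\<lambda>i. LC alphas i f2) ` ((\<lambda>i. (i + k) mod n) ` {0..<n})"
    unfolding LCset_def image_image using LCshift by simp
  then show "LCset alphas n f1 = LCset alphas n f2" using img by (simp add: LCset_def)
qed

end
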